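(* Fix an iteration $t$ and a slicing set $\mathcal U=\{u_i\}_{i=1}^m\subset\mathbb S^{d-1}$. Assume per-example gradients are $\ell_2$-clipped at radius $C>0$, the minibatch size $B_t\ge1$ is deterministic, and the slice-wise Lipschitz condition holds with constants $\{L_{t,i}\}_{i=1}^m$. Let $\overline K_t^2$ be a scalar such that for all $\theta\in\Theta$, $(s_i,s_j)\in\mathcal Q$, histories $y_{<t}$ in the support and couplings $\gamma\in\Pi(\mu^\theta_{s_i},\mu^\theta_{s_j})$, for $\gamma$-almost every $(X,X')$, $\mathbb E_{R_t}[K_t(X,X';R_t)^2]\le\overline K_t^2$. Then the vector $h^{\mathsf{sa}}_t=(h^{\mathsf{sa}}_{t,i})_{i=1}^m$ with \[ h^{\mathsf{sa}}_{t,i}:=\left(\frac{2L_{t,i}C}{B_t}\right)^2\overline K_t^2 \] is a valid subsampling-aware HUC (sa-HUC) for $\mathcal U$ at iteration $t$.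
   Context: Pufferfish scenario $(\mathcal S,\mathcal Q,\Theta)$: each $\theta\in\Theta$ is a joint law of a secret $S$ and a dataset $X=(X_1,\dots,X_n)\in\bar{\mathcal X}^n$; $\mu^\theta_s$ is the law of $X$ given $S=s$ under $\theta$; $\Pi(\mu,\nu)$ denotes couplings. At iteration $t$, subsampling randomness $R_t\sim\mathbb P_{\eta,\rho}$ (independent of data and secret) selects an index (multi)set $\mathsf I_t(R_t)\subseteq[n]$ of size $B_t$. A history $y_{<t}$ contains the parameter $\xi_{t-1}$. Clipped per-example gradients $\tilde g_t(x_j)=g_t(x_j)\min\{1,C/\|g_t(x_j)\|_2\}$ with $g_t(x_j)=\nabla_\xi\ell(\xi_{t-1};x_j)$; $\bar g_t(x;r)=\frac1{B_t}\sum_{j\in\mathsf I_t(r)}\tilde g_t(x_j)$; pre-noise update $f_t(x,y_{<t};r)=T_t(\bar g_t(x;r);y_{<t})$ with update map $T_t$. Discrepancy $K_t(x,x';r)=\sum_{j\in\mathsf I_t(r)}\mathbf 1\{x_j\ne x'_j\}$. Slice-wise Lipschitz condition: $|u_i^\top(T_t(z;y_{<t})-T_t(z';y_{<t}))|\le L_{t,i}|u_i^\top(z-z')|$ for all $z,z'$ and histories $y_{<t}$ in the support. sa-HUC: $h^{\mathsf{sa}}_t\in\mathbb R^m_+$ is an sa-HUC for $\mathcal U$ at iteration $t$ if for all $\theta\in\Theta$, $(s_i,s_j)\in\mathcal Q$, histories $y_{<t}$ in the support and every coupling $\gamma\in\Pi(\mu^\theta_{s_i},\mu^\theta_{s_j})$,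 for $\gamma$-almost every $(X,X')$ and all $i\in[m]$, $\mathbb E_{R_t}[|\langle f_t(X,y_{<t};R_t)-f_t(X',y_{<t};R_t),u_i\rangle|^2]\le h^{\mathsf{sa}}_{t,i}$, the expectation being only over $R_t\sim\mathbb P_{\eta,\rho}$. *)

theory Defs
  imports "HOL-Probability.Probability"
begin

definition clip :: "real \<Rightarrow> 'a::real_normed_vector \<Rightarrow> 'a" where
  "clip C g = min 1 (C / norm g) *\<^sub>R g"

text \<open>Minibatch mean of clipped per-example gradients over the index multiset I r.
  grad xi x is the per-example gradient of the loss at parameter xi on example x;
  param y is the parameter xi_{t-1} contained in the history y.\<close>
definition minibatch_grad ::
  "('a::real_normed_vector \<Rightarrow> 'x \<Rightarrow> 'a) \<Rightarrow> real \<Rightarrow> ('r \<Rightarrow> nat multiset) \<Rightarrow> nat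
    \<Rightarrow> (nat \<Rightarrow> 'x) \<Rightarrow> 'a \<Rightarrow> 'r \<Rightarrow> 'a" where
  "minibatch_grad grad C I B X xi r =
     (1 / real B) *\<^sub>R (\<Sum>\<^sub># (image_mset (\<lambda>j. clip C (grad xi (X j))) (I r)))"

definition pre_update ::
  "('y \<Rightarrow> 'a \<Rightarrow> 'a) \<Rightarrow> ('y \<Rightarrow> 'a) \<Rightarrow> ('a::real_normed_vector \<Rightarrow> 'x \<Rightarrow> 'a) \<Rightarrow> real
    \<Rightarrow> ('r \<Rightarrow> nat multiset) \<Rightarrow> nat \<Rightarrow> (nat \<Rightarrow> 'x) \<Rightarrow> 'y \<Rightarrow> 'r \<Rightarrow> 'a" where
  "pre_update T param grad C I B X y r = T y (minibatch_grad grad C I B X (param y) r)"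

definition discrepancy :: "('r \<Rightarrow> nat multiset) \<Rightarrow> (nat \<Rightarrow> 'x) \<Rightarrow> (nat \<Rightarrow> 'x) \<Rightarrow> 'r \<Rightarrow> nat" where
  "discrepancy I X X' r = size (filter_mset (\<lambda>j. X j \<noteq> X' j) (I r))"

definition coupling :: "('a \<times> 'b) measure \<Rightarrow> 'a measure \<Rightarrow> 'b measure \<Rightarrow> bool" where
  "coupling \<gamma> \<mu> \<nu> \<longleftrightarrow> prob_space \<gamma> \<and> sets \<gamma> = sets (\<mu> \<Otimes>\<^sub>M \<nu>)
     \<and> distr \<gamma> \<mu> fst = \<mu> \<and> distr \<gamma> \<nu> snd = \<nu>"

text \<open>Theta: scenario distributions, Q: discriminative pairs,
  mu th s: law of the dataset given S = s under th, Ysupp: histories in the support,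
  P: law of R_t, f: pre-noise update, U i (i < m): slicing directions, h: candidate vector.\<close>
definition sa_HUC ::
  "'th set \<Rightarrow> ('s \<times> 's) set \<Rightarrow> ('th \<Rightarrow> 's \<Rightarrow> (nat \<Rightarrow> 'x) measure) \<Rightarrow> 'y set \<Rightarrow> 'r measure
    \<Rightarrow> ((nat \<Rightarrow> 'x) \<Rightarrow> 'y \<Rightarrow> 'r \<Rightarrow> 'a::real_inner) \<Rightarrow> (nat \<Rightarrow> 'a) \<Rightarrow> nat \<Rightarrow> (nat \<Rightarrow> real) \<Rightarrow> bool" where
  "sa_HUC Theta Q mu Ysupp P f U m h \<longleftrightarrow>
     (\<forall>i<m. 0 \<le> h i) \<and>
     (\<forall>th\<in>Theta. \<forall>si sj. (si, sj) \<in> Q \<longrightarrow> (\<forall>y\<in>Ysupp. \<forall>\<gamma>. coupling \<gamma> (mu th si) (mu th sj) \<longrightarrow>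
        (AE p in \<gamma>. \<forall>i<m.
           (\<integral>\<^sup>+ r. ennreal ((\<bar>(f (fst p) y r - f (snd p) y r) \<bullet> U i\<bar>)\<^sup>2) \<partial>P) \<le> ennreal (h i))))"

end

theory Submission
  imports Defs
begin

lemma norm_clip_le: "C > 0 \<Longrightarrow> norm (clip C g) \<le> C"
proof -
  assume C: "C > 0"
  show ?thesis
  proof (cases "g = 0")
    case True then show ?thesis using C by (simp add: clip_def)
  next
    case False
    then have ng: "norm g > 0" by simp
    have "norm (clip C g) = \<bar>min 1 (C / norm g)\<bar> * norm g" by (simp add: clip_def)
    also have "\<dots> = min 1 (C / norm g) * norm g" using C ng by simp
    also have "\<dots> \<le> (C / norm g) * norm g" using ng by (intro mult_right_mono) auto
    also have "\<dots> = C" using ng by simp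
    finally show ?thesis .
  qed
qed

lemma msum_diff_bound:
  fixes h :: "'x \<Rightarrow> 'a::real_normed_vector"
  assumes C: "C > 0"
  shows "norm (\<Sum>\<^sub># (image_mset (\<lambda>j. clip C (h (X j))) M) - \<Sum>\<^sub># (image_mset (\<lambda>j. clip C (h (X' j))) M))
     \<le> 2 * C * real (size (filter_mset (\<lambda>j. X j \<noteq> X' j) M))"
proof (induction M)
  case empty then show ?case by simp
next
  case (add x M)
  let ?a = "clip C (h (X x))" and ?b = "clip C (h (X' x))"
  let ?S = "\<Sum>\<^sub># (image_mset (\<lambda>j. clip C (h (X j))) M)" and ?S' = "\<Sum>\<^sub># (image_mset (\<lambda>j. clip C (h (X' j))) M)"
  have e: "\<Sum>\<^sub># (image_mset (\<lambda>j. clip C (h (X j))) (add_mset x M)) - \<Sum>\<^sub># (image_mset (\<lambda>j. clip C (h (X' j))) (add_mset x M))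
     = (?a - ?b) + (?S - ?S')" by (simp add: algebra_simps)
  have ab: "norm (?a - ?b) \<le> (if X x \<noteq> X' x then 2 * C else 0)"
  proof (cases "X x = X' x")
    case False
    have "norm (?a - ?b) \<le> norm ?a + norm ?b" by (rule norm_triangle_ineq4)
    also have "\<dots> \<le> 2 * C" using norm_clip_le[OF C, of "h (X x)"] norm_clip_le[OF C, of "h (X' x)"] by simp
    finally show ?thesis using False by simp
  qed simp
  have "norm (\<Sum>\<^sub># (image_mset (\<lambda>j. clip C (h (X j))) (add_mset x M)) - \<Sum>\<^sub># (image_mset (\<lambda>j. clip C (h (X' j))) (add_mset x M)))
     = norm ((?a - ?b) + (?S - ?S'))" by (rule arg_cong[where f=norm, OF e])
  also have "norm ((?a - ?b) + (?S - ?S')) \<le> norm (?a - ?b) + norm (?S - ?S')" by (rule norm_triangle_ineq)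
  also have "\<dots> \<le> (if X x \<noteq> X' x then 2 * C else 0) + 2 * C * real (size (filter_mset (\<lambda>j. X j \<noteq> X' j) M))"
    using ab add.IH by linarith
  also have "\<dots> = 2 * C * real (size (filter_mset (\<lambda>j. X j \<noteq> X' j) (add_mset x M)))"
    by (cases "X x = X' x") (simp_all add: algebra_simps)
  finally show ?case .
qed

theorem proposition3:
  fixes Theta :: "'th set" and Q :: "('s \<times> 's) set"
    and mu :: "'th \<Rightarrow> 's \<Rightarrow> (nat \<Rightarrow> 'x) measure"
    and Ysupp :: "'y set" and P :: "'r measure"
    and I :: "'r \<Rightarrow> nat multiset" and n B :: nat
    and T :: "'y \<Rightarrow> 'a::euclidean_space \<Rightarrow> 'a" and param :: "'y \<Rightarrow> 'a"
    and grad :: "'a \<Rightarrow> 'x \<Rightarrow> 'a" and C :: real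
    and U :: "nat \<Rightarrow> 'a" and m :: nat and L :: "nat \<Rightarrow> real" and Kbar2 :: real
  assumes P_prob: "prob_space P"
    and I_meas: "I \<in> measurable P (count_space UNIV)"
    and I_range: "\<And>r. r \<in> space P \<Longrightarrow> set_mset (I r) \<subseteq> {..<n}"
    and batch_size: "\<And>r. r \<in> space P \<Longrightarrow> size (I r) = B"
    and B_pos: "B \<ge> 1"
    and C_pos: "C > 0"
    and unit: "\<And>i. i < m \<Longrightarrow> norm (U i) = 1"
    and lipschitz: "\<And>i y z z'. i < m \<Longrightarrow> y \<in> Ysupp \<Longrightarrow>
        \<bar>U i \<bullet> (T y z - T y z')\<bar> \<le> L i * \<bar>U i \<bullet> (z - z')\<bar>"
    and Kbar_nonneg: "Kbar2 \<ge> 0"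
    and Kbar: "\<And>th si sj y \<gamma>. th \<in> Theta \<Longrightarrow> (si, sj) \<in> Q \<Longrightarrow> y \<in> Ysupp \<Longrightarrow>
        coupling \<gamma> (mu th si) (mu th sj) \<Longrightarrow>
        (AE p in \<gamma>. (\<integral>\<^sup>+ r. ennreal ((real (discrepancy I (fst p) (snd p) r))\<^sup>2) \<partial>P) \<le> ennreal Kbar2)"
  shows "sa_HUC Theta Q mu Ysupp P (pre_update T param grad C I B) U m
           (\<lambda>i. (2 * L i * C / real B)\<^sup>2 * Kbar2)"
proof -
  have Bp: "real B > 0" using B_pos by simp
  have pw: "(\<bar>(pre_update T param grad C I B X y r - pre_update T param grad C I B X' y r) \<bullet> U i\<bar>)\<^sup>2
      \<le> (2 * L i * C / real B)\<^sup>2 * (real (discrepancy I X X' r))\<^sup>2"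
    if i: "i < m" and y: "y \<in> Ysupp" for i y X X' r
  proof -
    define z where "z = minibatch_grad grad C I B X (param y) r"
    define z' where "z' = minibatch_grad grad C I B X' (param y) r"
    define D where "D = real (discrepancy I X X' r)"
    have D0: "D \<ge> 0" by (simp add: D_def)
    have "z - z' = (1 / real B) *\<^sub>R (\<Sum>\<^sub># (image_mset (\<lambda>j. clip C (grad (param y) (X j))) (I r))
        - \<Sum>\<^sub># (image_mset (\<lambda>j. clip C (grad (param y) (X' j))) (I r)))"
      by (simp add: z_def z'_def minibatch_grad_def scaleR_diff_right)
    then have "norm (z - z') = (1 / real B) * norm (\<Sum>\<^sub># (image_mset (\<lambda>j. clip C (grad (param y) (X j))) (I r))
        - \<Sum>\<^sub># (image_mset (\<lambda>j. clip C (grad (param y) (X' j))) (I r)))"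
      using Bp by simp
    also have "\<dots> \<le> (1 / real B) * (2 * C * D)"
      unfolding D_def discrepancy_def
      by (intro mult_left_mono msum_diff_bound C_pos) (use Bp in simp)
    finally have nz: "norm (z - z') \<le> 2 * C * D / real B" by simp
    have "\<bar>U i \<bullet> (z - z')\<bar> \<le> norm (U i) * norm (z - z')" by (rule Cauchy_Schwarz_ineq2)
    then have uz: "\<bar>U i \<bullet> (z - z')\<bar> \<le> 2 * C * D / real B" using nz unit[OF i] by simp
    have lip: "\<bar>U i \<bullet> (T y z - T y z')\<bar> \<le> L i * \<bar>U i \<bullet> (z - z')\<bar>" by (rule lipschitz[OF i y])
    have lhs: "\<bar>(pre_update T param grad C I B X y r - pre_update T param grad C I B X' y r) \<bullet> U i\<bar>
        = \<bar>U i \<bullet> (T y z - T y z')\<bar>"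
      by (simp add: pre_update_def z_def z'_def inner_commute)
    show ?thesis
    proof (cases "L i \<ge> 0")
      case True
      have "\<bar>U i \<bullet> (T y z - T y z')\<bar> \<le> L i * (2 * C * D / real B)"
        using lip uz True mult_left_mono order_trans by blast
      also have "\<dots> = \<bar>2 * L i * C / real B * D\<bar>" using True C_pos Bp D0 by simp
      finally have "\<bar>U i \<bullet> (T y z - T y z')\<bar>\<^sup>2 \<le> \<bar>2 * L i * C / real B * D\<bar>\<^sup>2"
        by (intro power_mono) auto
      also have "\<bar>2 * L i * C / real B * D\<bar>\<^sup>2 = (2 * L i * C / real B)\<^sup>2 * D\<^sup>2"
        by (simp only: power2_abs power_mult_distrib)
      finally show ?thesis unfolding lhs D_def .
    next
      case False
      then have "L i * \<bar>U i \<bullet> (z - z')\<bar> \<le> 0" by (simp add: mult_nonpos_nonneg)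
      then have "\<bar>U i \<bullet> (T y z - T y z')\<bar> = 0" using lip by linarith
      then show ?thesis unfolding lhs by simp
    qed
  qed
  have meas: "(\<lambda>r. ennreal ((real (discrepancy I X X' r))\<^sup>2)) \<in> borel_measurable P" for X X'
  proof -
    have "(\<lambda>r. ennreal ((real (discrepancy I X X' r))\<^sup>2)) = (\<lambda>M. ennreal ((real (size (filter_mset (\<lambda>j. X j \<noteq> X' j) M)))\<^sup>2)) \<circ> I"
      by (auto simp: discrepancy_def)
    also have "\<dots> \<in> borel_measurable P"
      by (rule measurable_comp[OF I_meas]) simp
    finally show ?thesis .
  qed
  show ?thesis
    unfolding sa_HUC_def
  proof (intro conjI ballI allI impI)
    fix i assume "i < m" show "0 \<le> (2 * L i * C / real B)\<^sup>2 * Kbar2" using Kbar_nonneg by simp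
  next
    fix th si sj y \<gamma>
    assume th: "th \<in> Theta" and q: "(si, sj) \<in> Q" and y: "y \<in> Ysupp" and c: "coupling \<gamma> (mu th si) (mu th sj)"
    show "AE p in \<gamma>. \<forall>i<m. (\<integral>\<^sup>+ r. ennreal ((\<bar>(pre_update T param grad C I B (fst p) y r - pre_update T param grad C I B (snd p) y r) \<bullet> U i\<bar>)\<^sup>2) \<partial>P)
        \<le> ennreal ((2 * L i * C / real B)\<^sup>2 * Kbar2)"
      using Kbar[OF th q y c]
    proof eventually_elim
      case (elim p)
      show ?case
      proof (intro allI impI)
        fix i assume i: "i < m"
        let ?c = "(2 * L i * C / real B)\<^sup>2"
        have "(\<integral>\<^sup>+ r. ennreal ((\<bar>(pre_update T param grad C I B (fst p) y r - pre_update T param grad C I B (snd p) y r) \<bullet> U i\<bar>)\<^sup>2) \<partial>P)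
            \<le> (\<integral>\<^sup>+ r. ennreal ?c * ennreal ((real (discrepancy I (fst p) (snd p) r))\<^sup>2) \<partial>P)"
          by (intro nn_integral_mono) (use pw[OF i y] in \<open>simp add: ennreal_mult[symmetric]\<close>)
        also have "\<dots> = ennreal ?c * (\<integral>\<^sup>+ r. ennreal ((real (discrepancy I (fst p) (snd p) r))\<^sup>2) \<partial>P)"
          by (rule nn_integral_cmult[OF meas])
        also have "\<dots> \<le> ennreal ?c * ennreal Kbar2"
          using elim by (rule mult_left_mono) simp
        also have "\<dots> = ennreal (?c * Kbar2)" by (rule ennreal_mult[symmetric]) (simp_all add: Kbar_nonneg)
        finally show "(\<integral>\<^sup>+ r. ennreal ((\<bar>(pre_update T param grad C I B (fst p) y r - pre_update T param grad C I B (snd p) y r) \<bullet> U i\<bar>)\<^sup>2) \<partial>P)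
            \<le> ennreal (?c * Kbar2)" .
      qed
    qed
  qed
qed

end
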